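(* Let $\{a(n)\}_{n\in\mathbb{N}}$ be a sequence of non-negative numbers with $\sum_{n=1}^{\infty}a(n)\le 1$. Then for every $\varepsilon>0$ there exist infinitely many $n\in\mathbb{N}$ such that $\sum_{\ell=1}^{n}a(\ell\cdot n)<\frac{\varepsilon}{n}$. *)

theory Defs
  imports "HOL-Analysis.Analysis"
begin

end

theory Submission
  imports Defs "HOL-Computational_Algebra.Squarefree" "HOL-Computational_Algebra.Primes"
begin

lemma sqf_prod: assumes "squarefree (r::nat)" shows "\<Prod>(prime_factors r) = r"
proof -
  have r0: "r \<noteq> 0" using assms by (metis not_squarefree_0)
  have "(\<Prod>p \<in> prime_factors r. p ^ multiplicity p r) = r"
    using prod_prime_factors[OF r0] by simp
  moreover have "\<forall>p\<in>prime_factors r. multiplicity p r = 1"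
    using assms squarefree_factorial_semiring'[OF r0] by blast
  ultimately show ?thesis by (metis (no_types, lifting) power_one_right prod.cong)
qed

lemma card_multiples: assumes "p > 0" shows "real (card {n\<in>{1..x::nat}. p dvd n}) \<le> real x / real p"
proof -
  have "{n\<in>{1..x::nat}. p dvd n} \<subseteq> (\<lambda>j. p*j) ` {1..x div p}"
  proof
    fix n assume n: "n \<in> {n\<in>{1..x::nat}. p dvd n}"
    then obtain j where j: "n = p*j" by auto
    have "j \<ge> 1" using n j by (cases j) auto
    moreover have "j \<le> x div p" using n j assms
      by (metis atLeastAtMost_iff div_le_mono mem_Collect_eq nonzero_mult_div_cancel_left not_gr0)
    ultimately show "n \<in> (\<lambda>j. p*j) ` {1..x div p}" using j by auto
  qed
  hence "card {n\<in>{1..x::nat}. p dvd n} \<le> x div p"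
    by (metis (no_types, lifting) card_atLeastAtMost card_image_le diff_Suc_1 finite_atLeastAtMost le_trans card_mono finite_imageI)
  hence "real (card {n\<in>{1..x::nat}. p dvd n}) \<le> real (x div p)" by simp
  also have "\<dots> \<le> real x / real p" by (simp add: of_nat_div_le_of_nat)
  finally show ?thesis .
qed

lemma prime_recip_not_summable:
  "\<not> summable (\<lambda>n::nat. if prime n then 1 / real n else 0)"
proof
  define f where "f = (\<lambda>n::nat. if prime n then 1 / real n else 0)"
  assume "summable (\<lambda>n::nat. if prime n then 1 / real n else 0)"
  hence s: "summable f" by (simp add: f_def)
  have f0: "\<And>n. f n \<ge> 0" by (simp add: f_def)
  have "(\<lambda>K. \<Sum>n<K. f n) \<longlonglongrightarrow> suminf f" using s by (rule summable_LIMSEQ)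
  hence "eventually (\<lambda>K. suminf f - 1/2 < (\<Sum>n<K. f n)) sequentially"
    by (rule order_tendstoD) simp
  then obtain k where k: "suminf f - 1/2 < (\<Sum>n<Suc k. f n)"
    unfolding eventually_sequentially by (meson le_Suc_eq order_refl)
  define T :: nat where "T = 2^(k+3)"
  define x where "x = T*T"
  have "k < 2^k" by (rule less_exp)
  also have "(2::nat)^k \<le> T" unfolding T_def by (simp add: power_increasing)
  finally have kT: "k < T" .
  have "T \<le> x" unfolding x_def using kT by simp
  hence kx: "k < x" using kT by linarith
  define U where "U = {1..x}"
  define P where "P = {p\<in>{k<..x}. prime p}"
  define A where "A = {n\<in>U. \<exists>p. prime p \<and> k < p \<and> p dvd n}"
  define B where "B = {n\<in>U. \<forall>p. prime p \<and> p dvd n \<longrightarrow> p \<le> k}"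
  have UAB: "U = A \<union> B" unfolding U_def A_def B_def by auto
  have "A \<subseteq> (\<Union>p\<in>P. {n\<in>{1..x}. p dvd n})"
  proof
    fix n assume "n \<in> A"
    then obtain p where p: "prime p" "k < p" "p dvd n" "n \<in> {1..x}" unfolding A_def U_def by auto
    hence "p \<le> n" using dvd_imp_le[of p n] by auto
    hence "p \<le> x" using p(4) by auto
    thus "n \<in> (\<Union>p\<in>P. {n\<in>{1..x}. p dvd n})" using p unfolding P_def by auto
  qed
  hence "card A \<le> card (\<Union>p\<in>P. {n\<in>{1..x}. p dvd n})"
    by (intro card_mono) (auto simp: P_def)
  also have "\<dots> \<le> (\<Sum>p\<in>P. card {n\<in>{1..x}. p dvd n})"
    by (rule card_UN_le) (simp add: P_def)
  finally have "real (card A) \<le> (\<Sum>p\<in>P. real (card {n\<in>{1..x}. p dvd n}))"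
    by (metis of_nat_le_iff of_nat_sum)
  also have "\<dots> \<le> (\<Sum>p\<in>P. real x / real p)"
    by (intro sum_mono card_multiples) (auto simp: P_def prime_gt_0_nat)
  also have "\<dots> = real x * (\<Sum>n\<in>{k<..x}. f n)"
  proof -
    have "(\<Sum>n\<in>{k<..x}. f n) = (\<Sum>n\<in>P. f n)"
      unfolding P_def by (rule sum.mono_neutral_right) (auto simp: f_def)
    also have "\<dots> = (\<Sum>p\<in>P. 1 / real p)" by (intro sum.cong) (auto simp: P_def f_def)
    finally show ?thesis by (simp add: sum_distrib_left)
  qed
  also have "\<dots> < real x * (1/2)"
  proof -
    have "{..<Suc x} = {..<Suc k} \<union> {k<..x}" using kx by auto
    hence "(\<Sum>n<Suc x. f n) = (\<Sum>n\<in>{..<Suc k} \<union> {k<..x}. f n)" by simp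
    also have "\<dots> = (\<Sum>n<Suc k. f n) + (\<Sum>n\<in>{k<..x}. f n)"
      by (rule sum.union_disjoint) auto
    finally have "(\<Sum>n<Suc x. f n) = (\<Sum>n<Suc k. f n) + (\<Sum>n\<in>{k<..x}. f n)" .
    moreover have "(\<Sum>n<Suc x. f n) \<le> suminf f" using s f0 by (intro sum_le_suminf) auto
    ultimately have "(\<Sum>n\<in>{k<..x}. f n) < 1/2" using k by linarith
    moreover have "real x > 0" using kx by simp
    ultimately show ?thesis by simp
  qed
  finally have cA: "real (card A) < real x / 2" by simp
  define h where "h = (\<lambda>(S::nat set, s::nat). \<Prod>S * s^2)"
  have "B \<subseteq> h ` (Pow {..k} \<times> {1..T})"
  proof
    fix n assume n: "n \<in> B"
    have n0: "n \<noteq> 0" "n \<le> T*T" using n unfolding B_def U_def x_def by auto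
    have dec: "n = squarefree_part n * square_part n ^ 2" by (rule squarefree_decompose)
    have "square_part n \<noteq> 0" using n0(1) by simp
    hence sq0: "square_part n \<ge> 1" by linarith
    have "square_part n ^ 2 dvd n" by (rule square_part_square_dvd)
    hence "square_part n ^ 2 \<le> n" using n0(1) by (intro dvd_imp_le) auto
    hence "square_part n ^ 2 \<le> T^2" using n0 by (simp add: power2_eq_square)
    hence sqT: "square_part n \<le> T" by (rule power2_le_imp_le) auto
    have pf: "prime_factors (squarefree_part n) \<subseteq> {..k}"
    proof
      fix p assume "p \<in> prime_factors (squarefree_part n)"
      hence "prime p" "p dvd squarefree_part n" by auto
      moreover have "squarefree_part n dvd n" using dec by (metis dvd_triv_left)
      ultimately show "p \<in> {..k}" using n unfolding B_def by (auto dest: dvd_trans)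
    qed
    have "h (prime_factors (squarefree_part n), square_part n) = squarefree_part n * square_part n ^ 2"
      unfolding h_def using sqf_prod[OF squarefree_squarefree_part] by simp
    also have "\<dots> = n" by (rule dec[symmetric])
    finally have hn: "n = h (prime_factors (squarefree_part n), square_part n)" by simp
    show "n \<in> h ` (Pow {..k} \<times> {1..T})"
      by (rule image_eqI[where f=h, OF hn]) (use pf sq0 sqT in auto)
  qed
  hence "card B \<le> card (h ` (Pow {..k} \<times> {1..T}))"
    by (intro card_mono) auto
  also have "\<dots> \<le> card (Pow {..k} \<times> {1..T})"
    by (rule card_image_le) simp
  also have "\<dots> = 2^(k+1) * T" by (simp add: card_Pow card_cartesian_product)
  finally have cB: "4 * card B \<le> x" unfolding x_def T_def by (simp add: power_add)
  have "x = card U" by (simp add: U_def)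
  also have "\<dots> \<le> card A + card B" unfolding UAB by (rule card_Un_le)
  finally have "real x \<le> real (card A) + real (card B)" by linarith
  with cA cB show False by linarith
qed

theorem lemma5:
  fixes a :: "nat \<Rightarrow> real" and \<epsilon> :: real
  assumes nonneg: "\<And>n. n \<ge> 1 \<Longrightarrow> a n \<ge> 0"
    and summ: "summable (\<lambda>n. a (Suc n))"
    and le1: "(\<Sum>n. a (Suc n)) \<le> 1"
    and eps: "\<epsilon> > 0"
  shows "infinite {n::nat. n \<ge> 1 \<and> (\<Sum>l=1..n. a (l * n)) < \<epsilon> / real n}"
proof
  define S where "S = (\<lambda>n. (\<Sum>l=1..n. a (l * n)))"
  assume "finite {n::nat. n \<ge> 1 \<and> (\<Sum>l=1..n. a (l * n)) < \<epsilon> / real n}"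
  hence "\<exists>m. \<forall>n\<in>{n::nat. n \<ge> 1 \<and> (\<Sum>l=1..n. a (l * n)) < \<epsilon> / real n}. n < m"
    by (simp only: finite_nat_set_iff_bounded)
  then obtain N where N: "\<And>n. n \<in> {n::nat. n \<ge> 1 \<and> (\<Sum>l=1..n. a (l * n)) < \<epsilon> / real n} \<Longrightarrow> n < N"
    by blast
  have big: "\<And>n. N \<le> n \<Longrightarrow> 1 \<le> n \<Longrightarrow> \<epsilon> / real n \<le> S n"
  proof -
    fix n assume "N \<le> n" "1 \<le> n"
    hence "n \<notin> {n::nat. n \<ge> 1 \<and> (\<Sum>l=1..n. a (l * n)) < \<epsilon> / real n}" using N by force
    thus "\<epsilon> / real n \<le> S n" using \<open>1 \<le> n\<close> unfolding S_def by auto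
  qed
  have partial: "\<And>K. (\<Sum>m\<in>{1..K}. a m) \<le> 1"
  proof -
    fix K
    have "{1..K} = Suc ` {..<K}" by (simp add: atLeast1_atMost_eq_remove0 lessThan_Suc_atMost[symmetric] image_Suc_lessThan)
    hence "(\<Sum>m\<in>{1..K}. a m) = (\<Sum>n<K. a (Suc n))" by (simp add: sum.reindex)
    also have "\<dots> \<le> (\<Sum>n. a (Suc n))" using summ nonneg by (intro sum_le_suminf) auto
    finally show "(\<Sum>m\<in>{1..K}. a m) \<le> 1" using le1 by linarith
  qed
  have key: "\<And>(Q::nat set) (M::nat). finite Q \<Longrightarrow> (\<forall>p\<in>Q. prime p \<and> p \<le> M) \<Longrightarrow> (\<Sum>p\<in>Q. S p) \<le> 1"
  proof -
    fix Q :: "nat set" and M :: nat assume fQ: "finite Q" and Q: "\<forall>p\<in>Q. prime p \<and> p \<le> M"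
    define Sig where "Sig = Sigma Q (\<lambda>p. {1..p})"
    define g where "g = (\<lambda>z::nat\<times>nat. snd z * fst z)"
    have "(\<Sum>p\<in>Q. S p) = (\<Sum>z\<in>Sig. a (g z))"
      unfolding S_def Sig_def g_def using fQ by (simp add: sum.Sigma case_prod_beta)
    also have "inj_on g Sig"
    proof (rule inj_onI)
      fix z w assume z: "z \<in> Sig" and w: "w \<in> Sig" and e: "g z = g w"
      obtain p l where zz: "z = (p, l)" by (cases z)
      obtain q l' where ww: "w = (q, l')" by (cases w)
      have pq: "prime p" "prime q" "1 \<le> l" "l \<le> p" "1 \<le> l'" "l' \<le> q"
        using z w Q unfolding zz ww Sig_def by auto
      have e': "l * p = l' * q" using e unfolding g_def zz ww by simp
      show "z = w"
      proof (cases "p = q")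
        case True
        then show ?thesis using e' pq prime_gt_0_nat unfolding zz ww by auto
      next
        case False
        have "p dvd l' * q" using e' by (metis dvd_triv_right)
        moreover have "\<not> p dvd q" using False pq by (metis primes_dvd_imp_eq)
        ultimately have "p dvd l'" using pq prime_dvd_mult_iff by blast
        hence "p \<le> l'" using pq dvd_imp_le by auto
        have "q dvd l * p" using e' by (metis dvd_triv_right)
        moreover have "\<not> q dvd p" using False pq by (metis primes_dvd_imp_eq)
        ultimately have "q dvd l" using pq prime_dvd_mult_iff by blast
        hence "q \<le> l" using pq dvd_imp_le by auto
        show ?thesis using \<open>p \<le> l'\<close> \<open>q \<le> l\<close> pq False by linarith
      qed
    qed
    hence "(\<Sum>z\<in>Sig. a (g z)) = (\<Sum>m\<in>g ` Sig. a m)" by (simp add: sum.reindex)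
    also have "\<dots> \<le> (\<Sum>m\<in>{1..M*M}. a m)"
    proof (rule sum_mono2)
      show "g ` Sig \<subseteq> {1..M*M}"
      proof
        fix m assume "m \<in> g ` Sig"
        then obtain p l where pl: "p \<in> Q" "1 \<le> l" "l \<le> p" "m = l * p"
          unfolding Sig_def g_def by auto
        have "p \<le> M" using Q pl by auto
        hence "l * p \<le> M * M" using pl by (meson le_trans mult_le_mono)
        moreover have "1 \<le> l * p" using pl Q prime_gt_0_nat by (metis One_nat_def Suc_leI mult_pos_pos not_le not_less_eq_eq)
        ultimately show "m \<in> {1..M*M}" using pl by auto
      qed
    qed (use nonneg in auto)
    also have "\<dots> \<le> 1" by (rule partial)
    finally show "(\<Sum>p\<in>Q. S p) \<le> 1" .
  qed
  define f where "f = (\<lambda>n::nat. if prime n then 1 / real n else 0)"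
  have f0: "\<And>n. 0 \<le> f n" by (simp add: f_def)
  have f1: "\<And>n. f n \<le> 1"
  proof -
    fix n show "f n \<le> 1"
    proof (cases "prime n")
      case True
      hence "real n \<ge> 1" using prime_gt_1_nat[of n] by simp
      thus ?thesis using True by (simp add: f_def)
    qed (simp add: f_def)
  qed
  have "summable f"
  proof (rule summableI_nonneg_bounded[OF f0])
    fix K
    define M where "M = max K N"
    have MN: "{..<M} = {..<N} \<union> {N..<M}" by (auto simp: M_def)
    have "(\<Sum>i<K. f i) \<le> (\<Sum>i<M. f i)" by (rule sum_mono2) (auto simp: M_def f0)
    also have "\<dots> = (\<Sum>i\<in>{..<N} \<union> {N..<M}. f i)" by (simp only: MN)
    also have "\<dots> = (\<Sum>i<N. f i) + (\<Sum>i\<in>{N..<M}. f i)"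
      by (rule sum.union_disjoint) auto
    finally have h0: "(\<Sum>i<K. f i) \<le> (\<Sum>i<N. f i) + (\<Sum>i\<in>{N..<M}. f i)" .
    have h1: "(\<Sum>i<N. f i) \<le> real N" using sum_mono[of "{..<N}" f "\<lambda>_. 1"] f1 by simp
    have h2: "(\<Sum>i\<in>{N..<M}. f i) \<le> 1 / \<epsilon>"
    proof -
      define Q where "Q = {p\<in>{N..<M}. prime p}"
      have kQ: "(\<Sum>p\<in>Q. S p) \<le> 1" by (rule key[of Q M]) (auto simp: Q_def)
      have "(\<Sum>i\<in>{N..<M}. f i) = (\<Sum>p\<in>Q. f p)"
      proof (rule sum.mono_neutral_right)
        show "finite {N..<M}" by simp
        show "Q \<subseteq> {N..<M}" unfolding Q_def by blast
        show "\<forall>i\<in>{N..<M} - Q. f i = 0" unfolding Q_def f_def by simp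
      qed
      also have "\<dots> \<le> (\<Sum>p\<in>Q. S p / \<epsilon>)"
      proof (rule sum_mono)
        fix p assume p: "p \<in> Q"
        hence pN: "N \<le> p" and pp: "prime p" unfolding Q_def by auto
        have "1 \<le> p" using prime_gt_0_nat[OF pp] by linarith
        hence "\<epsilon> / real p \<le> S p" using big pN by blast
        hence "1 / real p \<le> S p / \<epsilon>" using eps by (simp add: field_simps)
        thus "f p \<le> S p / \<epsilon>" using p unfolding Q_def f_def by simp
      qed
      also have "\<dots> = (\<Sum>p\<in>Q. S p) / \<epsilon>" by (simp add: sum_divide_distrib)
      also have "\<dots> \<le> 1 / \<epsilon>" using kQ eps by (simp add: divide_right_mono)
      finally show ?thesis .
    qed
    show "(\<Sum>i<K. f i) \<le> real N + 1 / \<epsilon>" using h0 h1 h2 by linarith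
  qed
  thus False using prime_recip_not_summable unfolding f_def by simp
qed

end
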